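(* Consider the symmetric first-price sealed-bid auction with $n=2$ bidders and uniform prior $F=\mathrm{Id}$ on $[0,1]$, and let $0<\delta\le\frac15$. Then the function $\beta^*(x)=\frac{x}{2}$ (the unique symmetric BNE) does not satisfy the symmetric MVI: there exist $\beta,\tilde\beta\in\mathcal{B}_\delta$ with $DU(\beta,\tilde\beta)[\beta-\beta^*]>0$. Moreover, the condition fails locally: for every open neighborhood $N$ of $\beta^*$ in $V$, there exist $\beta,\tilde\beta\in N\cap\mathcal{B}_\delta$ with $DU(\beta,\tilde\beta)[\beta-\beta^*]>0$.
   Context: $V:=W^{1,1}(0,1)$. For $\delta>0$, $\mathcal{B}_\delta:=\{\beta\in V:0\le\beta\le1\text{ a.e.},\ \delta\le\beta'\text{ a.e.},\ \beta(0)=0\}$. Two bidders with values i.i.d. uniform on $[0,1]$. First-price ex-ante utility of bidder 1 bidding by $\beta$ against the other bidding by $\tilde\beta$: $U(\beta,\tilde\beta)=\int_0^1(x-\beta(x))\int_0^1\chi_{\{\beta(x)>\tilde\beta(y)\}}\,\mathrm{d}y\,\mathrm{d}x$. $DU(\beta,\tilde\beta)[d]:=\lim_{\varepsilon\to0}\varepsilon^{-1}(U(\beta+\varepsilon d,\tilde\beta)-U(\beta,\tilde\beta))$ for $d\in V$. $\beta^*$ solves the symmetric MVI if $DU(\beta,\tilde\beta)[\beta-\beta^*]\le0$ for all $\beta,\tilde\beta\in\mathcal{B}_\delta$. *)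

theory Defs
  imports "HOL-Analysis.Analysis"
begin

text \<open>Elements of V = W^{1,1}(0,1) are represented by (the absolutely continuous
  representative of) a function real => real; only values on [0,1] matter.
  g is a weak derivative of beta on (0,1) iff g is integrable on [0,1] and
  beta x = beta 0 + integral of g over [0,x] for all x in [0,1].\<close>

definition weak_deriv :: "(real \<Rightarrow> real) \<Rightarrow> (real \<Rightarrow> real) \<Rightarrow> bool" where
  "weak_deriv \<beta> g \<longleftrightarrow> set_integrable lborel {0..1} g \<and>
     (\<forall>x\<in>{0..1}. \<beta> x = \<beta> 0 + (LINT t:{0..x}|lborel. g t))"

definition W11 :: "(real \<Rightarrow> real) \<Rightarrow> bool" where
  "W11 \<beta> \<longleftrightarrow> (\<exists>g. weak_deriv \<beta> g)"

text \<open>The weak derivative (unique up to null sets).\<close>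
definition wd :: "(real \<Rightarrow> real) \<Rightarrow> (real \<Rightarrow> real)" where
  "wd \<beta> = (SOME g. weak_deriv \<beta> g)"

definition w11_dist :: "(real \<Rightarrow> real) \<Rightarrow> (real \<Rightarrow> real) \<Rightarrow> real" where
  "w11_dist \<beta> \<gamma> = (LINT x:{0..1}|lborel. \<bar>\<beta> x - \<gamma> x\<bar>)
                   + (LINT x:{0..1}|lborel. \<bar>wd \<beta> x - wd \<gamma> x\<bar>)"

definition W11_open :: "(real \<Rightarrow> real) set \<Rightarrow> bool" where
  "W11_open N \<longleftrightarrow> N \<subseteq> {\<beta>. W11 \<beta>} \<and>
     (\<forall>\<beta>\<in>N. \<exists>e>0. \<forall>\<gamma>. W11 \<gamma> \<and> w11_dist \<gamma> \<beta> < e \<longrightarrow> \<gamma> \<in> N)"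

definition Bdelta :: "real \<Rightarrow> (real \<Rightarrow> real) set" where
  "Bdelta \<delta> = {\<beta>. W11 \<beta> \<and>
     (AE x in lborel. x \<in> {0..1} \<longrightarrow> 0 \<le> \<beta> x \<and> \<beta> x \<le> 1 \<and> \<delta> \<le> wd \<beta> x) \<and>
     \<beta> 0 = 0}"

text \<open>Ex-ante first-price utility of bidder 1 bidding by beta against beta~, uniform values.\<close>
definition U :: "(real \<Rightarrow> real) \<Rightarrow> (real \<Rightarrow> real) \<Rightarrow> real" where
  "U \<beta> \<beta>' = (LINT x:{0..1}|lborel. (x - \<beta> x) *
       (LINT y:{0..1}|lborel. (if \<beta> x > \<beta>' y then 1 else 0)))"

definition has_DU :: "(real \<Rightarrow> real) \<Rightarrow> (real \<Rightarrow> real) \<Rightarrow> (real \<Rightarrow> real) \<Rightarrow> real \<Rightarrow> bool" where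
  "has_DU \<beta> \<beta>' d L \<longleftrightarrow>
     ((\<lambda>\<epsilon>. (U (\<lambda>x. \<beta> x + \<epsilon> * d x) \<beta>' - U \<beta> \<beta>') / \<epsilon>) \<longlongrightarrow> L) (at 0)"

end

theory Submission
  imports Defs
begin



lemma wd_unique:
  assumes g: "weak_deriv \<beta> g" and h: "weak_deriv \<beta> h"
  shows "AE x in lborel. x \<in> {0..1} \<longrightarrow> g x = h x"
proof -
  have gi: "set_integrable lborel {0..1} g" and hi: "set_integrable lborel {0..1} h"
    using g h unfolding weak_deriv_def by blast+
  have eq: "(LINT t:{0..x}|lborel. g t) = (LINT t:{0..x}|lborel. h t)" if "x \<in> {0..1}" for x
  proof -
    have "\<beta> x = \<beta> 0 + (LINT t:{0..x}|lborel. g t)" using g that unfolding weak_deriv_def by blast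
    moreover have "\<beta> x = \<beta> 0 + (LINT t:{0..x}|lborel. h t)" using h that unfolding weak_deriv_def by blast
    ultimately show ?thesis by linarith
  qed
  define k where "k x = indicator {0..1} x * (g x - h x)" for x :: real
  have ki: "integrable lborel k"
    using set_integral_diff(1)[OF gi hi] unfolding k_def set_integrable_def by simp
  have kb[measurable]: "k \<in> borel_measurable lborel" using ki by (rule borel_measurable_integrable)
  have eqS: "(LINT x:{0..1} \<inter> {..t}|lborel. g x) = (LINT x:{0..1} \<inter> {..t}|lborel. h x)" for t :: real
  proof (cases "t < 0")
    case True
    then have "{0..1} \<inter> {..t} = ({}::real set)" by auto
    then show ?thesis by (simp add: set_lebesgue_integral_def)
  next
    case False
    then have "{0..1} \<inter> {..t} = {0..min 1 t}" by (auto simp: min_def)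
    then show ?thesis using eq[of "min 1 t"] False by simp
  qed
  have zero: "integral\<^sup>L lborel (\<lambda>x. k x * indicator {t<..} x) = 0" for t :: real
  proof -
    have gS: "set_integrable lborel ({0..1} \<inter> {..t}) g"
      by (rule set_integrable_subset[OF gi]) auto
    have hS: "set_integrable lborel ({0..1} \<inter> {..t}) h"
      by (rule set_integrable_subset[OF hi]) auto
    have "(\<lambda>x. k x * indicator {t<..} x) = (\<lambda>x. (indicator {0..1} x *\<^sub>R g x - indicator {0..1} x *\<^sub>R h x)
        - (indicator ({0..1} \<inter> {..t}) x *\<^sub>R g x - indicator ({0..1} \<inter> {..t}) x *\<^sub>R h x))"
      by (auto simp: k_def indicator_def fun_eq_iff)
    then have "integral\<^sup>L lborel (\<lambda>x. k x * indicator {t<..} x) =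
      ((LINT x:{0..1}|lborel. g x) - (LINT x:{0..1}|lborel. h x)) - ((LINT x:{0..1} \<inter> {..t}|lborel. g x) - (LINT x:{0..1} \<inter> {..t}|lborel. h x))"
      using gi hi gS hS unfolding set_integrable_def set_lebesgue_integral_def
      by (simp add: Bochner_Integration.integral_diff)
    also have "\<dots> = 0" using eqS[of t] eq[of 1] by simp
    finally show ?thesis .
  qed
  define M1 where "M1 = density lborel (\<lambda>x. ennreal (k x))"
  define M2 where "M2 = density lborel (\<lambda>x. ennreal (- k x))"
  have finN: "(\<integral>\<^sup>+x. ennreal (norm (k x)) \<partial>lborel) < \<infinity>" using ki by (simp add: integrable_iff_bounded)
  have fin1: "(\<integral>\<^sup>+x. ennreal (k x) * indicator A x \<partial>lborel) < \<infinity>" for A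
    by (rule le_less_trans[OF _ finN]) (auto intro!: nn_integral_mono simp: indicator_def)
  have fin2: "(\<integral>\<^sup>+x. ennreal (- k x) * indicator A x \<partial>lborel) < \<infinity>" for A
    by (rule le_less_trans[OF _ finN]) (auto intro!: nn_integral_mono simp: indicator_def)
  have "M1 = M2"
  proof (rule measure_eqI_lessThan)
    show "sets M1 = sets borel" "sets M2 = sets borel" by (auto simp: M1_def M2_def)
    fix t :: real
    have "emeasure M1 {t<..} = (\<integral>\<^sup>+x. ennreal (k x) * indicator {t<..} x \<partial>lborel)"
      unfolding M1_def by (rule emeasure_density) auto
    then show "emeasure M1 {t<..} < \<infinity>" using fin1[of "{t<..}"] by simp
    have ii: "integrable lborel (\<lambda>x. k x * indicator {t<..} x)"
      by (rule integrable_real_mult_indicator[OF _ ki]) simp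
    define P where "P = (\<integral>\<^sup>+x. ennreal (k x) * indicator {t<..} x \<partial>lborel)"
    define Q where "Q = (\<integral>\<^sup>+x. ennreal (- k x) * indicator {t<..} x \<partial>lborel)"
    have hA: "(\<integral>\<^sup>+x. ennreal (k x * indicator {t<..} x) \<partial>lborel) = P"
      unfolding P_def by (intro nn_integral_cong) (simp add: indicator_def)
    have hB: "(\<integral>\<^sup>+x. ennreal (- (k x * indicator {t<..} x)) \<partial>lborel) = Q"
      unfolding Q_def by (intro nn_integral_cong) (simp add: indicator_def)
    have "integral\<^sup>L lborel (\<lambda>x. k x * indicator {t<..} x) = enn2real P - enn2real Q"
      using real_lebesgue_integral_def[OF ii] unfolding hA hB .
    then have "enn2real P = enn2real Q" using zero[of t] by linarith
    then have "ennreal (enn2real P) = ennreal (enn2real Q)" by (rule arg_cong)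
    moreover have "P < top" using fin1[of "{t<..}"] by (simp add: P_def)
    moreover have "Q < top" using fin2[of "{t<..}"] by (simp add: Q_def)
    ultimately have "P = Q" by (simp only: ennreal_enn2real)
    then have "(\<integral>\<^sup>+x. ennreal (k x) * indicator {t<..} x \<partial>lborel) = (\<integral>\<^sup>+x. ennreal (- k x) * indicator {t<..} x \<partial>lborel)"
      by (simp only: P_def Q_def)
    then show "emeasure M1 {t<..} = emeasure M2 {t<..}" unfolding M1_def M2_def
      by (simp add: emeasure_density)
  qed
  then have "AE x in lborel. ennreal (k x) = ennreal (- k x)"
    unfolding M1_def M2_def
    by (subst (asm) finite_density_unique) (use fin1[of UNIV] in auto)
  then show ?thesis
  proof (rule eventually_mono)
    fix x assume "ennreal (k x) = ennreal (- k x)"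
    then have "k x = 0"
    proof (cases "k x \<ge> 0")
      case True
      then have "ennreal (- k x) = 0" by (intro ennreal_neg) simp
      with \<open>ennreal (k x) = ennreal (- k x)\<close> have "ennreal (k x) = 0" by simp
      with True show ?thesis by simp
    next
      case False
      then have "ennreal (k x) = 0" by (intro ennreal_neg) simp
      with \<open>ennreal (k x) = ennreal (- k x)\<close> have "ennreal (- k x) = 0" by simp
      then have "- k x \<le> 0" by (simp add: ennreal_eq_0_iff)
      with False show ?thesis by simp
    qed
    then show "x \<in> {0..1} \<longrightarrow> g x = h x" by (auto simp: k_def indicator_def)
  qed
qed



lemma lint_ftc:
  fixes f G :: "real \<Rightarrow> real"
  assumes ab: "a \<le> b" and cont: "continuous_on {a..b} f"
    and der: "\<And>x. x \<in> {a..b} \<Longrightarrow> (G has_real_derivative f x) (at x within {a..b})"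
  shows "(LINT x:{a..b}|lborel. f x) = G b - G a"
proof -
  have "(LINT x:{a..b}|lborel. f x) = integral {a..b} f"
    by (rule set_borel_integral_eq_integral(2)[OF borel_integrable_atLeastAtMost'[OF cont]])
  also have "\<dots> = G b - G a"
    by (rule integral_unique, rule fundamental_theorem_of_calculus[OF ab])
       (use der in \<open>auto simp: has_real_derivative_iff_has_vector_derivative\<close>)
  finally show ?thesis .
qed

lemma hk_ftc:
  fixes f g G :: "real \<Rightarrow> real"
  assumes ab: "a \<le> b"
    and der: "\<And>x. x \<in> {a..b} \<Longrightarrow> (G has_real_derivative g x) (at x)"
    and fg: "\<And>x. x \<in> {a..b} \<Longrightarrow> f x = g x"
  shows "integral {a..b} f = G b - G a"
proof -
  have "integral {a..b} f = integral {a..b} g" by (rule integral_cong) (use fg in auto)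
  also have "\<dots> = G b - G a"
    by (rule integral_unique, rule fundamental_theorem_of_calculus[OF ab])
       (use der in \<open>auto simp: has_real_derivative_iff_has_vector_derivative intro: has_vector_derivative_at_within\<close>)
  finally show ?thesis .
qed

lemma weak_deriv_lin: "weak_deriv (\<lambda>x. a * x) (\<lambda>_. a)"
  unfolding weak_deriv_def
proof
  show "set_integrable lborel {0..1::real} (\<lambda>_. a)"
    by (rule borel_integrable_atLeastAtMost'[OF continuous_on_const])
  show "\<forall>x\<in>{0..1}. a * x = a * 0 + (LINT t:{0..x}|lborel. a)"
  proof
    fix x :: real assume "x \<in> {0..1}"
    then have "(LINT t:{0..x}|lborel. a) = measure lborel {0..x} *\<^sub>R a"
      by (intro set_integral_const) auto
    then show "a * x = a * 0 + (LINT t:{0..x}|lborel. a)" using \<open>x \<in> {0..1}\<close> by simp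
  qed
qed

lemma inner_int:
  fixes A c x :: real
  assumes "0 < c" "0 \<le> A * x"
  shows "(LINT y:{0..1}|lborel. (if A * x > c * y then 1 else 0)) = min 1 (A * x / c)"
proof -
  define t where "t = A * x / c"
  have t0: "0 \<le> t" using assms by (simp add: t_def)
  have "(LINT y:{0..1}|lborel. (if A * x > c * y then 1 else 0)) = integral\<^sup>L lborel (indicator ({0..1} \<inter> {..<t}))"
    unfolding set_lebesgue_integral_def
    by (intro Bochner_Integration.integral_cong refl)
       (use assms in \<open>auto simp: t_def indicator_def field_simps\<close>)
  also have "\<dots> = measure lborel ({0..1} \<inter> {..<t})" by simp
  also have "\<dots> = min 1 t"
  proof (cases "t \<le> 1")
    case True
    then have "{0..1} \<inter> {..<t} = {0..<t}" by auto
    then show ?thesis using True t0 by (simp add: measure_def)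
  next
    case False
    then have "{0..1} \<inter> {..<t} = {0..1::real}" by auto
    then show ?thesis using False by simp
  qed
  finally show ?thesis by (simp add: t_def)
qed

lemma U_lin:
  fixes A c :: real
  assumes c0: "0 < c" and cA: "c \<le> A"
  shows "U (\<lambda>x. A * x) (\<lambda>y. c * y) = (1 - A) * (1/2 - c^2 / (6 * A^2))"
proof -
  have A0: "0 < A" using assms by simp
  define f where "f x = (x - A * x) * min 1 (A * x / c)" for x
  have "U (\<lambda>x. A * x) (\<lambda>y. c * y) = (LINT x:{0..1}|lborel. f x)"
    unfolding U_def f_def
    by (intro set_lebesgue_integral_cong) (use A0 c0 in \<open>auto simp: inner_int\<close>)
  also have "\<dots> = integral {0..1} f"
    by (rule set_borel_integral_eq_integral(2)[OF borel_integrable_atLeastAtMost'])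
       (use c0 in \<open>auto simp: f_def intro!: continuous_intros\<close>)
  also have "\<dots> = integral {0..c/A} f + integral {c/A..1} f"
  proof -
    have "f integrable_on {0..1}" unfolding f_def
      by (rule integrable_continuous_interval) (use c0 in \<open>auto intro!: continuous_intros\<close>)
    moreover have "0 \<le> c/A" "c/A \<le> 1" using c0 A0 cA by auto
    ultimately show ?thesis using Henstock_Kurzweil_Integration.integral_combine[where a=0 and c="c/A" and b=1 and f=f] by simp
  qed
  also have "integral {0..c/A} f = (1-A)*A/c * (c/A)^3/3 - (1-A)*A/c * 0^3/3"
    by (rule hk_ftc[where g="\<lambda>x. (1-A)*A/c * x^2"])
       (use c0 A0 cA in \<open>auto intro!: derivative_eq_intros simp: f_def field_simps power2_eq_square min_def\<close>)
  also have "integral {c/A..1} f = (1-A) * 1^2/2 - (1-A) * (c/A)^2/2"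
    by (rule hk_ftc[where g="\<lambda>x. (1-A) * x"])
       (use c0 A0 cA in \<open>auto intro!: derivative_eq_intros simp: f_def field_simps power2_eq_square min_def\<close>)
  also have "(1-A)*A/c * (c/A)^3/3 - (1-A)*A/c * 0^3/3 + ((1-A) * 1^2/2 - (1-A) * (c/A)^2/2)
     = (1 - A) * (1/2 - c^2 / (6 * A^2))"
    using A0 c0 by (simp add: field_simps power2_eq_square power3_eq_cube)
  finally show ?thesis .
qed



lemma W11_lin: "W11 (\<lambda>x. a * x)"
  unfolding W11_def using weak_deriv_lin by blast

lemma wd_is: "weak_deriv (\<lambda>x. a * x) (wd (\<lambda>x. a * x))"
  unfolding wd_def by (rule someI[where P="weak_deriv (\<lambda>x. a * x)", OF weak_deriv_lin])

lemma wd_lin: "AE x in lborel. x \<in> {0..1} \<longrightarrow> wd (\<lambda>x. a * x) x = a"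
  by (rule wd_unique[OF wd_is weak_deriv_lin])

lemma wd_meas: "(\<lambda>x. indicator {0..1} x *\<^sub>R wd (\<lambda>x. a * x) x) \<in> borel_measurable lborel"
  using wd_is[of a] unfolding weak_deriv_def set_integrable_def by auto

lemma half_eq: "(\<lambda>x::real. x / 2) = (\<lambda>x. (1/2) * x)" by auto

lemma wd_half: "AE x in lborel. x \<in> {0..1} \<longrightarrow> wd (\<lambda>x. x / 2) x = 1/2"
  using wd_lin[of "1/2"] unfolding half_eq[symmetric] .

lemma wd_meas_half: "(\<lambda>x. indicator {0..1} x *\<^sub>R wd (\<lambda>x. x / 2) x) \<in> borel_measurable lborel"
  using wd_meas[of "1/2"] unfolding half_eq[symmetric] .

lemma Bdelta_lin:
  assumes "\<delta> \<le> a" "a \<le> 1" and a0: "0 \<le> a"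
  shows "(\<lambda>x. a * x) \<in> Bdelta \<delta>"
proof -
  show ?thesis unfolding Bdelta_def
  proof (intro CollectI conjI W11_lin)
    show "a * 0 = 0" by simp
    show "AE x in lborel. x \<in> {0..1} \<longrightarrow> 0 \<le> a * x \<and> a * x \<le> 1 \<and> \<delta> \<le> wd (\<lambda>x. a * x) x"
      using wd_lin[of a]
    proof (rule eventually_mono)
      fix x assume h: "x \<in> {0..1} \<longrightarrow> wd (\<lambda>x. a * x) x = a"
      show "x \<in> {0..1} \<longrightarrow> 0 \<le> a * x \<and> a * x \<le> 1 \<and> \<delta> \<le> wd (\<lambda>x. a * x) x"
      proof
        assume x: "x \<in> {0..1}"
        then have "0 \<le> a * x" using a0 by simp
        moreover have "a * x \<le> 1" using x a0 assms(2) mult_le_one[of a x] by simp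
        moreover have "\<delta> \<le> wd (\<lambda>x. a * x) x" using h x assms(1) by simp
        ultimately show "0 \<le> a * x \<and> a * x \<le> 1 \<and> \<delta> \<le> wd (\<lambda>x. a * x) x" by blast
      qed
    qed
  qed
qed


lemma dist_lin: "w11_dist (\<lambda>x. a * x) (\<lambda>x. x / 2) = 3/2 * \<bar>a - 1/2\<bar>"
proof -
  have p1: "(LINT x:{0..1}|lborel. \<bar>a * x - x / 2\<bar>) = \<bar>a - 1/2\<bar> / 2"
  proof -
    have "(LINT x:{0..1}|lborel. \<bar>a * x - x / 2\<bar>) = (LINT x:{0..1}|lborel. \<bar>a - 1/2\<bar> * x)"
    proof (intro set_lebesgue_integral_cong allI impI)
      fix x :: real assume "x \<in> {0..1}"
      have "a * x - x / 2 = (a - 1/2) * x" by (simp add: algebra_simps)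
      then show "\<bar>a * x - x / 2\<bar> = \<bar>a - 1/2\<bar> * x" using \<open>x \<in> {0..1}\<close> by (simp add: abs_mult)
    qed simp
    also have "\<dots> = \<bar>a - 1/2\<bar> * 1^2/2 - \<bar>a - 1/2\<bar> * 0^2/2"
    proof (rule lint_ftc[where G="\<lambda>x. \<bar>a - 1/2\<bar> * x^2/2"])
      show "continuous_on {0..1} (\<lambda>x. \<bar>a - 1/2\<bar> * x)"
        by (intro continuous_on_mult_left continuous_on_id)
      fix x :: real
      show "((\<lambda>x. \<bar>a - 1/2\<bar> * x^2/2) has_real_derivative \<bar>a - 1/2\<bar> * x) (at x within {0..1})"
        by (auto intro!: derivative_eq_intros)
    qed simp
    finally show ?thesis by simp
  qed
  have p2: "(LINT x:{0..1}|lborel. \<bar>wd (\<lambda>x. a * x) x - wd (\<lambda>x. x / 2) x\<bar>) = \<bar>a - 1/2\<bar>"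
  proof -
    have "(LINT x:{0..1}|lborel. \<bar>wd (\<lambda>x. a * x) x - wd (\<lambda>x. x / 2) x\<bar>)
        = integral\<^sup>L lborel (\<lambda>x. \<bar>indicator {0..1} x *\<^sub>R wd (\<lambda>x. a * x) x - indicator {0..1} x *\<^sub>R wd (\<lambda>x. x / 2) x\<bar>)"
      unfolding set_lebesgue_integral_def
      by (intro Bochner_Integration.integral_cong refl) (auto simp: indicator_def)
    also have "\<dots> = integral\<^sup>L lborel (\<lambda>x::real. indicator {0..1} x *\<^sub>R \<bar>a - 1/2\<bar>)"
    proof (rule Bochner_Integration.integral_cong_AE)
      show "(\<lambda>x. \<bar>indicator {0..1} x *\<^sub>R wd (\<lambda>x. a * x) x - indicator {0..1} x *\<^sub>R wd (\<lambda>x. x / 2) x\<bar>) \<in> borel_measurable lborel"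
        by (intro borel_measurable_abs borel_measurable_diff wd_meas wd_meas_half)
      show "(\<lambda>x::real. indicator {0..1} x *\<^sub>R \<bar>a - 1/2\<bar>) \<in> borel_measurable lborel" by simp
      show "AE x in lborel. \<bar>indicator {0..1} x *\<^sub>R wd (\<lambda>x. a * x) x - indicator {0..1} x *\<^sub>R wd (\<lambda>x. x / 2) x\<bar> = indicator {0..1} x *\<^sub>R \<bar>a - 1/2\<bar>"
        using wd_lin[of a] wd_half by eventually_elim (auto simp: indicator_def)
    qed
    also have "\<dots> = (LINT x:{0..1::real}|lborel. \<bar>a - 1/2\<bar>)" by (simp add: set_lebesgue_integral_def)
    also have "\<dots> = measure lborel {0..1::real} *\<^sub>R \<bar>a - 1/2\<bar>"
      by (rule set_integral_const) auto
    finally show ?thesis by simp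
  qed
  show ?thesis unfolding w11_dist_def p1 p2 by simp
qed




lemma deriv_F:
  fixes a c k :: real assumes a0: "0 < a"
  shows "((\<lambda>\<epsilon>. (1 - (a + \<epsilon> * k)) * (1/2 - c^2 / (6 * (a + \<epsilon> * k)^2))) has_real_derivative
     (k * (c^2 / (6 * a^2) - 1/2 + (1 - a) * c^2 / (3 * a^3)))) (at 0)"
proof -
  have e: "a * (k * c^2) / (3 * a ^ 4) = k * c^2 / (3 * a^3)"
    using a0 by (simp add: eval_nat_numeral)
  show ?thesis
    apply (intro derivative_eq_intros)
    apply (rule refl)+
    using a0 apply simp_all
    unfolding e by (simp add: algebra_simps)
qed


lemma pos_L:
  fixes s :: real
  assumes s0: "0 < s" and s1: "s \<le> 1/8"
  shows "0 < ((1/2 - s) - 1/2) * ((1/2 - 2* s)^2 / (6 * (1/2 - s)^2) - 1/2 + (1 - (1/2 - s)) * (1/2 - 2* s)^2 / (3 * (1/2 - s)^3))"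
proof -
  define a where "a = 1/2 - s"
  define c where "c = 1/2 - 2* s"
  have a0: "0 < a" using s1 by (simp add: a_def)
  define B where "B = c^2 / (6 * a^2) - 1/2 + (1 - a) * c^2 / (3 * a^3)"
  have "B * (6 * a^3) = c^2 * (2 - a) - 3 * a^3"
    using a0 by (simp add: B_def field_simps eval_nat_numeral)
  also have "\<dots> = - (s * (1/2 + s/2 - 7 * s^2))"
    by (simp add: a_def c_def algebra_simps eval_nat_numeral)
  also have "\<dots> < 0"
  proof -
    have "s * s \<le> (1/8) * (1/8)" using mult_mono[OF s1 s1] s0 by simp
    then have "s^2 \<le> 1/64" by (simp add: power2_eq_square)
    then have "0 < 1/2 + s/2 - 7 * s^2" using s0 by simp
    then show ?thesis using s0 by simp
  qed
  finally have "B < 0" using a0 by (simp add: mult_less_0_iff)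
  moreover have "a - 1/2 < 0" using s0 by (simp add: a_def)
  ultimately have "0 < (a - 1/2) * B" by (simp add: mult_neg_neg)
  then show ?thesis by (simp add: a_def c_def B_def)
qed

lemma has_DU_lin:
  fixes a c :: real
  assumes c0: "0 < c" and ca: "c < a"
  shows "has_DU (\<lambda>x. a * x) (\<lambda>y. c * y) (\<lambda>x. a * x - x / 2)
           ((a - 1/2) * (c^2 / (6 * a^2) - 1/2 + (1 - a) * c^2 / (3 * a^3)))"
proof -
  have a0: "0 < a" using c0 ca by simp
  define k where "k = a - 1/2"
  define F where "F \<epsilon> = (1 - (a + \<epsilon> * k)) * (1/2 - c^2 / (6 * (a + \<epsilon> * k)^2))" for \<epsilon>
  have D: "(F has_real_derivative (k * (c^2 / (6 * a^2) - 1/2 + (1 - a) * c^2 / (3 * a^3)))) (at 0)"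
    unfolding F_def by (rule deriv_F[OF a0])
  then have lim: "((\<lambda>h. (F (0 + h) - F 0) / h) \<longlongrightarrow> (k * (c^2 / (6 * a^2) - 1/2 + (1 - a) * c^2 / (3 * a^3)))) (at 0)"
    by (simp add: DERIV_def)
  define d where "d = (a - c) / (\<bar>k\<bar> + 1)"
  have d0: "0 < d" using ca by (simp add: d_def add_pos_nonneg)
  have ev: "eventually (\<lambda>\<epsilon>. (F (0 + \<epsilon>) - F 0) / \<epsilon> =
       (U (\<lambda>x. a * x + \<epsilon> * (a * x - x / 2)) (\<lambda>y. c * y) - U (\<lambda>x. a * x) (\<lambda>y. c * y)) / \<epsilon>) (at 0)"
    unfolding eventually_at
  proof (intro exI[of _ d] conjI d0 ballI impI)
    fix \<epsilon> :: real assume "\<epsilon> \<noteq> 0 \<and> dist \<epsilon> 0 < d"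
    then have e: "\<bar>\<epsilon>\<bar> < d" by simp
    have "\<bar>\<epsilon> * k\<bar> \<le> \<bar>\<epsilon>\<bar> * (\<bar>k\<bar> + 1)" by (simp add: abs_mult mult_left_mono)
    also have "\<dots> < d * (\<bar>k\<bar> + 1)" using e by (intro mult_strict_right_mono) (auto simp: add_pos_nonneg)
    also have "\<dots> = a - c" by (simp add: d_def add_pos_nonneg)
    finally have cA: "c \<le> a + \<epsilon> * k" by linarith
    have fun_eq: "(\<lambda>x. a * x + \<epsilon> * (a * x - x / 2)) = (\<lambda>x. (a + \<epsilon> * k) * x)"
      by (auto simp: k_def algebra_simps fun_eq_iff)
    have "U (\<lambda>x. a * x + \<epsilon> * (a * x - x / 2)) (\<lambda>y. c * y) = F \<epsilon>"
      unfolding fun_eq F_def by (rule U_lin[OF c0 cA])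
    moreover have "U (\<lambda>x. a * x) (\<lambda>y. c * y) = F 0"
      unfolding F_def using U_lin[OF c0 less_imp_le[OF ca]] by simp
    ultimately show "(F (0 + \<epsilon>) - F 0) / \<epsilon> =
       (U (\<lambda>x. a * x + \<epsilon> * (a * x - x / 2)) (\<lambda>y. c * y) - U (\<lambda>x. a * x) (\<lambda>y. c * y)) / \<epsilon>" by simp
  qed
  show ?thesis unfolding has_DU_def
    using tendsto_cong[OF ev] lim by (simp add: k_def)
qed


theorem lemma4:
  fixes \<delta> :: real
  assumes "0 < \<delta>" and "\<delta> \<le> 1/5"
  shows "(\<exists>\<beta>\<in>Bdelta \<delta>. \<exists>\<beta>'\<in>Bdelta \<delta>. \<exists>L>0. has_DU \<beta> \<beta>' (\<lambda>x. \<beta> x - x / 2) L)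
       \<and> (\<forall>N. W11_open N \<and> (\<lambda>x. x / 2) \<in> N \<longrightarrow>
            (\<exists>\<beta>\<in>N \<inter> Bdelta \<delta>. \<exists>\<beta>'\<in>N \<inter> Bdelta \<delta>. \<exists>L>0. has_DU \<beta> \<beta>' (\<lambda>x. \<beta> x - x / 2) L))"
proof -
  have part2: "\<forall>N. W11_open N \<and> (\<lambda>x. x / 2) \<in> N \<longrightarrow>
            (\<exists>\<beta>\<in>N \<inter> Bdelta \<delta>. \<exists>\<beta>'\<in>N \<inter> Bdelta \<delta>. \<exists>L>0. has_DU \<beta> \<beta>' (\<lambda>x. \<beta> x - x / 2) L)"
  proof (intro allI impI)
    fix N assume hN: "W11_open N \<and> (\<lambda>x. x / 2) \<in> N"
    then obtain e where e0: "e > 0" and eN: "\<And>\<gamma>. W11 \<gamma> \<Longrightarrow> w11_dist \<gamma> (\<lambda>x. x / 2) < e \<Longrightarrow> \<gamma> \<in> N"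
      unfolding W11_open_def by blast
    define s where "s = min (1/8) (e/4)"
    have s0: "0 < s" and s1: "s \<le> 1/8" and s2: "s \<le> e/4" using e0 by (auto simp: s_def)
    define a where "a = 1/2 - s"
    define c where "c = 1/2 - 2* s"
    have aN: "(\<lambda>x. a * x) \<in> N"
      by (rule eN[OF W11_lin]) (use s0 s2 e0 in \<open>simp add: dist_lin a_def\<close>)
    have cN: "(\<lambda>x. c * x) \<in> N"
      by (rule eN[OF W11_lin]) (use s0 s2 e0 in \<open>simp add: dist_lin c_def\<close>)
    have aB: "(\<lambda>x. a * x) \<in> Bdelta \<delta>"
      by (rule Bdelta_lin) (use s0 s1 assms in \<open>auto simp: a_def\<close>)
    have cB: "(\<lambda>x. c * x) \<in> Bdelta \<delta>"
      by (rule Bdelta_lin) (use s0 s1 assms in \<open>auto simp: c_def\<close>)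
    have c0: "0 < c" and ca: "c < a" using s0 s1 by (auto simp: a_def c_def)
    have DU: "has_DU (\<lambda>x. a * x) (\<lambda>y. c * y) (\<lambda>x. a * x - x / 2)
           ((a - 1/2) * (c^2 / (6 * a^2) - 1/2 + (1 - a) * c^2 / (3 * a^3)))"
      by (rule has_DU_lin[OF c0 ca])
    have Lpos: "0 < (a - 1/2) * (c^2 / (6 * a^2) - 1/2 + (1 - a) * c^2 / (3 * a^3))"
      unfolding a_def c_def by (rule pos_L[OF s0 s1])
    show "\<exists>\<beta>\<in>N \<inter> Bdelta \<delta>. \<exists>\<beta>'\<in>N \<inter> Bdelta \<delta>. \<exists>L>0. has_DU \<beta> \<beta>' (\<lambda>x. \<beta> x - x / 2) L"
      using aN cN aB cB DU Lpos by blast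
  qed
  have "W11_open {\<beta>. W11 \<beta>}" unfolding W11_open_def using zero_less_one by blast
  moreover have "(\<lambda>x. x / 2) \<in> {\<beta>. W11 \<beta>}" unfolding half_eq using W11_lin by simp
  ultimately have "\<exists>\<beta>\<in>{\<beta>. W11 \<beta>} \<inter> Bdelta \<delta>. \<exists>\<beta>'\<in>{\<beta>. W11 \<beta>} \<inter> Bdelta \<delta>. \<exists>L>0. has_DU \<beta> \<beta>' (\<lambda>x. \<beta> x - x / 2) L"
    using part2 by blast
  then have "\<exists>\<beta>\<in>Bdelta \<delta>. \<exists>\<beta>'\<in>Bdelta \<delta>. \<exists>L>0. has_DU \<beta> \<beta>' (\<lambda>x. \<beta> x - x / 2) L" by blast
  with part2 show ?thesis by blast
qed


end
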